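(* Let $X$ be a proper CAT(0) space and let $b$ and $c$ be distinct geodesic rays starting at $\mathfrak o$. Then for every $n>0$, $c$ is not contained in $\mathcal N_\kappa(b,n)$. In particular, distinct geodesic rays do not $\kappa$--fellow travel, so each $\kappa$--fellow travelling class of quasi-geodesic rays contains at most one geodesic ray.
   Context: $X$ has base point $\mathfrak o$, $\|x\|=d_X(\mathfrak o,x)$. $\kappa:[0,\infty)\to[1,\infty)$ is monotone increasing, concave and sublinear, $\kappa(x):=\kappa(\|x\|)$. $\mathcal N_\kappa(Z,n)=\{x: d_X(x,Z)\le n\,\kappa(x)\}$. Two quasi-geodesic rays (continuous quasi-isometric embeddings of $[0,\infty)$ starting at $\mathfrak o$) $\kappa$--fellow travel if each lies in some $(\kappa,n)$--neighbourhood of the other. *)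

theory Defs
  imports "HOL-Analysis.Analysis"
begin

text \<open>The space X is the whole (metric space) type 'a.\<close>

definition geodesic_segment :: "(real \<Rightarrow> 'a::metric_space) \<Rightarrow> 'a \<Rightarrow> 'a \<Rightarrow> bool" where
  "geodesic_segment g x y \<longleftrightarrow> g 0 = x \<and> g (dist x y) = y \<and>
     (\<forall>s\<in>{0..dist x y}. \<forall>t\<in>{0..dist x y}. dist (g s) (g t) = \<bar>s - t\<bar>)"

definition geodesic_space :: "'a::metric_space itself \<Rightarrow> bool" where
  "geodesic_space TYPE('a) \<longleftrightarrow> (\<forall>x y::'a. \<exists>g. geodesic_segment g x y)"

definition proper_space :: "'a::metric_space itself \<Rightarrow> bool" where
  "proper_space TYPE('a) \<longleftrightarrow> (\<forall>(x::'a) r. compact (cball x r))"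

text \<open>Point of the Euclidean comparison segment [a',b'] (in the plane, modelled by complex)
  corresponding to parameter s on a geodesic of length L.\<close>
definition cmp_pt :: "complex \<Rightarrow> complex \<Rightarrow> real \<Rightarrow> real \<Rightarrow> complex" where
  "cmp_pt a b L s = (if L = 0 then a else a + complex_of_real (s / L) * (b - a))"

definition CAT0 :: "'a::metric_space itself \<Rightarrow> bool" where
  "CAT0 TYPE('a) \<longleftrightarrow> geodesic_space TYPE('a) \<and>
    (\<forall>(p::'a) q r g1 g2 g3 p' q' r'.
       geodesic_segment g1 p q \<and> geodesic_segment g2 q r \<and> geodesic_segment g3 r p \<and>
       dist p' q' = dist p q \<and> dist q' r' = dist q r \<and> dist r' p' = dist r p \<longrightarrow>
       (\<forall>s\<in>{0..dist p q}. \<forall>t\<in>{0..dist q r}.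
          dist (g1 s) (g2 t) \<le> dist (cmp_pt p' q' (dist p q) s) (cmp_pt q' r' (dist q r) t)) \<and>
       (\<forall>s\<in>{0..dist q r}. \<forall>t\<in>{0..dist r p}.
          dist (g2 s) (g3 t) \<le> dist (cmp_pt q' r' (dist q r) s) (cmp_pt r' p' (dist r p) t)) \<and>
       (\<forall>s\<in>{0..dist r p}. \<forall>t\<in>{0..dist p q}.
          dist (g3 s) (g1 t) \<le> dist (cmp_pt r' p' (dist r p) s) (cmp_pt p' q' (dist p q) t)))"

definition geodesic_ray :: "'a::metric_space \<Rightarrow> (real \<Rightarrow> 'a) \<Rightarrow> bool" where
  "geodesic_ray o' g \<longleftrightarrow> g 0 = o' \<and> (\<forall>s\<ge>0. \<forall>t\<ge>0. dist (g s) (g t) = \<bar>s - t\<bar>)"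

definition quasi_geodesic_ray :: "'a::metric_space \<Rightarrow> (real \<Rightarrow> 'a) \<Rightarrow> bool" where
  "quasi_geodesic_ray o' g \<longleftrightarrow> g 0 = o' \<and> continuous_on {0..} g \<and>
     (\<exists>q Q. q \<ge> 1 \<and> Q \<ge> 0 \<and> (\<forall>s\<ge>0. \<forall>t\<ge>0.
        \<bar>s - t\<bar> / q - Q \<le> dist (g s) (g t) \<and> dist (g s) (g t) \<le> q * \<bar>s - t\<bar> + Q))"

definition sublinear_kappa :: "(real \<Rightarrow> real) \<Rightarrow> bool" where
  "sublinear_kappa \<kappa> \<longleftrightarrow> mono_on {0..} \<kappa> \<and> concave_on {0..} \<kappa> \<and>
     (\<forall>t\<ge>0. \<kappa> t \<ge> 1) \<and> ((\<lambda>t. \<kappa> t / t) \<longlongrightarrow> 0) at_top"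

definition kappa_nbhd :: "(real \<Rightarrow> real) \<Rightarrow> 'a::metric_space \<Rightarrow> 'a set \<Rightarrow> real \<Rightarrow> 'a set" where
  "kappa_nbhd \<kappa> o' Z n = {x. infdist x Z \<le> n * \<kappa> (dist o' x)}"

definition kappa_fellow_travel :: "(real \<Rightarrow> real) \<Rightarrow> 'a::metric_space \<Rightarrow> (real \<Rightarrow> 'a) \<Rightarrow> (real \<Rightarrow> 'a) \<Rightarrow> bool" where
  "kappa_fellow_travel \<kappa> o' a b \<longleftrightarrow>
     (\<exists>n. a ` {0..} \<subseteq> kappa_nbhd \<kappa> o' (b ` {0..}) n) \<and>
     (\<exists>n. b ` {0..} \<subseteq> kappa_nbhd \<kappa> o' (a ` {0..}) n)"

end

theory Submission
  imports Defs
begin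

lemma cmp_tri:
  fixes t D :: real
  assumes "t > 0" "0 \<le> D" "D \<le> 2*t"
  shows "\<exists>q r::complex. cmod q = t \<and> cmod r = t \<and> cmod (q - r) = D"
proof -
  define x where "x = sqrt (t^2 - D^2/4)"
  define y where "y = D/2"
  have "D^2 \<le> (2*t)^2" using assms by (intro power_mono) auto
  hence h: "t^2 - D^2/4 \<ge> 0" by (simp add: power_mult_distrib)
  have xx: "x^2 = t^2 - D^2/4" unfolding x_def using h by simp
  have "cmod (Complex x y) = t"
    unfolding cmod_def using xx assms by (simp add: y_def power_divide)
  moreover have "cmod (Complex x (-y)) = t"
    unfolding cmod_def using xx assms by (simp add: y_def power_divide)
  moreover have "cmod (Complex x y - Complex x (-y)) = D"
    unfolding cmod_def using assms by (simp add: y_def)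
  ultimately show ?thesis by blast
qed

lemma growth:
  fixes o' :: "'a::metric_space" and b c :: "real \<Rightarrow> 'a"
  assumes cat: "CAT0 TYPE('a)"
    and rb: "geodesic_ray o' b" and rc: "geodesic_ray o' c"
    and t0: "0 \<le> t0" "t0 \<le> t" "0 < t"
  shows "dist (b t0) (c t0) \<le> (t0/t) * dist (b t) (c t)"
proof -
  have b0: "b 0 = o'" and bi: "\<And>s u. s\<ge>0 \<Longrightarrow> u\<ge>0 \<Longrightarrow> dist (b s) (b u) = \<bar>s-u\<bar>"
    using rb unfolding geodesic_ray_def by auto
  have c0: "c 0 = o'" and ci: "\<And>s u. s\<ge>0 \<Longrightarrow> u\<ge>0 \<Longrightarrow> dist (c s) (c u) = \<bar>s-u\<bar>"
    using rc unfolding geodesic_ray_def by auto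
  have db: "dist o' (b t) = t" using bi[of 0 t] b0 t0 by simp
  have dc: "dist (c t) o' = t" using ci[of t 0] c0 t0 by simp
  define D where "D = dist (b t) (c t)"
  have D2: "D \<le> 2*t" unfolding D_def
    using dist_triangle3[of "b t" "c t" o'] db dc by (simp add: dist_commute)
  obtain q' r' :: complex where qr: "cmod q' = t" "cmod r' = t" "cmod (q' - r') = D"
    using cmp_tri[of t D] D2 t0 by (auto simp: D_def)
  have geo: "geodesic_space TYPE('a)" using cat unfolding CAT0_def by auto
  obtain g2 where g2: "geodesic_segment g2 (b t) (c t)"
    using geo unfolding geodesic_space_def by blast
  have g1: "geodesic_segment b o' (b t)"
    unfolding geodesic_segment_def using b0 db bi by auto
  have g3: "geodesic_segment (\<lambda>s. c (t - s)) (c t) o'"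
    unfolding geodesic_segment_def using dc ci c0 by (auto simp: abs_minus_commute)
  have dpq: "dist (0::complex) q' = dist o' (b t)" using qr db by (simp add: dist_norm)
  have dqr: "dist q' r' = dist (b t) (c t)" using qr by (simp add: dist_norm D_def)
  have drp: "dist r' 0 = dist (c t) o'" using qr dc by (simp add: dist_norm)
  have "\<forall>s\<in>{0..dist (c t) o'}. \<forall>u\<in>{0..dist o' (b t)}.
          dist ((\<lambda>s. c (t - s)) s) (b u) \<le> dist (cmp_pt r' 0 (dist (c t) o') s) (cmp_pt 0 q' (dist o' (b t)) u)"
  proof -
    have "\<forall>(p::'a) q r g1 g2 g3 p' q' r'.
       geodesic_segment g1 p q \<and> geodesic_segment g2 q r \<and> geodesic_segment g3 r p \<and>
       dist p' q' = dist p q \<and> dist q' r' = dist q r \<and> dist r' p' = dist r p \<longrightarrow>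
       (\<forall>s\<in>{0..dist r p}. \<forall>t\<in>{0..dist p q}.
          dist (g3 s) (g1 t) \<le> dist (cmp_pt r' p' (dist r p) s) (cmp_pt p' q' (dist p q) t))"
      using cat unfolding CAT0_def by blast
    from this[rule_format, of b o' "b t" g2 "c t" "\<lambda>s. c (t - s)" 0 q' r']
    show ?thesis using g1 g2 g3 dpq dqr drp by blast
  qed
  hence "\<forall>s\<in>{0..t}. \<forall>u\<in>{0..t}.
          dist (c (t - s)) (b u) \<le> dist (cmp_pt r' 0 t s) (cmp_pt 0 q' t u)"
    using db dc by simp
  moreover have "t - t0 \<in> {0..t}" "t0 \<in> {0..t}" using t0 by auto
  ultimately have "dist (c (t - (t - t0))) (b t0) \<le> dist (cmp_pt r' 0 t (t - t0)) (cmp_pt 0 q' t t0)"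
    by blast
  hence "dist (c t0) (b t0) \<le> dist (cmp_pt r' 0 t (t - t0)) (cmp_pt 0 q' t t0)"
    by simp
  also have "cmp_pt r' 0 t (t - t0) = complex_of_real (t0/t) * r'"
    using t0 unfolding cmp_pt_def by (simp add: field_simps)
  also have "cmp_pt 0 q' t t0 = complex_of_real (t0/t) * q'"
    using t0 unfolding cmp_pt_def by simp
  also have "dist (complex_of_real (t0/t) * r') (complex_of_real (t0/t) * q') = (t0/t) * D"
  proof -
    have "dist (complex_of_real (t0/t) * r') (complex_of_real (t0/t) * q')
        = cmod (complex_of_real (t0/t) * (r' - q'))" by (simp only: dist_norm right_diff_distrib)
    also have "\<dots> = (t0/t) * cmod (q' - r')" using t0
      by (simp only: norm_mult norm_of_real norm_minus_commute) (simp add: abs_of_nonneg)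
    finally show ?thesis using qr by simp
  qed
  finally show ?thesis by (simp add: D_def dist_commute)
qed

theorem lemma3p3:
  fixes \<kappa> :: "real \<Rightarrow> real" and o' :: "'a::metric_space" and b c :: "real \<Rightarrow> 'a"
  assumes "sublinear_kappa \<kappa>"
    and "proper_space TYPE('a)" and "CAT0 TYPE('a)"
    and "geodesic_ray o' b" and "geodesic_ray o' c"
    and "\<exists>t\<ge>0. b t \<noteq> c t"
  shows "(\<forall>n>0. \<not> (c ` {0..} \<subseteq> kappa_nbhd \<kappa> o' (b ` {0..}) n))
         \<and> \<not> kappa_fellow_travel \<kappa> o' b c"
proof -
  have kap1: "\<And>t. t \<ge> 0 \<Longrightarrow> \<kappa> t \<ge> 1" and lim: "((\<lambda>t. \<kappa> t / t) \<longlongrightarrow> 0) at_top"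
    using assms(1) unfolding sublinear_kappa_def by auto
  have b0: "b 0 = o'" and bi: "\<And>s u. s\<ge>0 \<Longrightarrow> u\<ge>0 \<Longrightarrow> dist (b s) (b u) = \<bar>s-u\<bar>"
    using assms(4) unfolding geodesic_ray_def by auto
  have c0: "c 0 = o'" and ci: "\<And>s u. s\<ge>0 \<Longrightarrow> u\<ge>0 \<Longrightarrow> dist (c s) (c u) = \<bar>s-u\<bar>"
    using assms(5) unfolding geodesic_ray_def by auto
  obtain t0 where t0: "t0 \<ge> 0" "b t0 \<noteq> c t0" using assms(6) by blast
  have t0p: "t0 > 0" using t0 b0 c0 by (cases "t0 = 0") auto
  define d0 where "d0 = dist (b t0) (c t0)"
  have d0p: "d0 > 0" using t0 by (simp add: d0_def)
  have main: "\<not> (c ` {0..} \<subseteq> kappa_nbhd \<kappa> o' (b ` {0..}) n)" if n: "n > 0" for n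
  proof
    assume sub: "c ` {0..} \<subseteq> kappa_nbhd \<kappa> o' (b ` {0..}) n"
    define e where "e = d0 / (2 * t0 * n)"
    have ep: "e > 0" using d0p t0p n by (simp add: e_def)
    have "eventually (\<lambda>t. \<kappa> t / t < e) at_top" using order_tendstoD(2)[OF lim ep] .
    then obtain N where N: "\<And>t. t \<ge> N \<Longrightarrow> \<kappa> t / t < e"
      unfolding eventually_at_top_linorder by blast
    define t where "t = max N t0"
    have tt: "t \<ge> t0" "t \<ge> N" "t > 0" using t0p by (auto simp: t_def)
    have g: "d0 \<le> (t0/t) * dist (b t) (c t)"
      unfolding d0_def using growth[OF assms(3,4,5), of t0 t] tt t0 by simp
    have dct: "dist o' (c t) = t" using ci[of 0 t] c0 tt by simp
    have lower: "dist (b t) (c t) / 2 \<le> infdist (c t) (b ` {0..})"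
    proof -
      have ne: "b ` {0..} \<noteq> {}" by auto
      have "dist (b t) (c t) / 2 \<le> dist (c t) a" if a: "a \<in> b ` {0..}" for a
      proof -
        obtain s where s: "s \<ge> 0" "a = b s" using a by auto
        have dbs: "dist o' (b s) = s" using bi[of 0 s] b0 s by simp
        have "\<bar>t - s\<bar> \<le> dist (c t) (b s)"
          using dist_triangle[of o' "c t" "b s"] dist_triangle[of o' "b s" "c t"] dct dbs
          by (simp add: dist_commute abs_le_iff)
        moreover have "dist (b t) (c t) \<le> dist (b t) (b s) + dist (b s) (c t)"
          by (rule dist_triangle)
        ultimately show ?thesis using bi[of t s] s tt by (simp add: dist_commute)
      qed
      thus ?thesis unfolding infdist_notempty[OF ne] by (intro cINF_greatest ne) auto
    qed
    have "c t \<in> kappa_nbhd \<kappa> o' (b ` {0..}) n" using sub tt by auto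
    hence up: "infdist (c t) (b ` {0..}) \<le> n * \<kappa> t"
      unfolding kappa_nbhd_def using dct by simp
    have "t * d0 / (2 * t0) \<le> dist (b t) (c t) / 2"
      using g tt t0p by (simp add: field_simps)
    hence A: "t * d0 / (2 * t0) \<le> n * \<kappa> t" using lower up by linarith
    have B: "\<kappa> t < e * t" using N[OF tt(2)] tt by (simp add: field_simps)
    have "n * \<kappa> t < n * (e * t)" using B n by simp
    also have "n * (e * t) = t * d0 / (2 * t0)" using n t0p by (simp add: e_def field_simps)
    finally show False using A by linarith
  qed
  have "\<not> kappa_fellow_travel \<kappa> o' b c"
  proof
    assume "kappa_fellow_travel \<kappa> o' b c"
    then obtain n where n: "c ` {0..} \<subseteq> kappa_nbhd \<kappa> o' (b ` {0..}) n"
      unfolding kappa_fellow_travel_def by blast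
    have "c ` {0..} \<subseteq> kappa_nbhd \<kappa> o' (b ` {0..}) (max n 1)"
    proof
      fix x assume "x \<in> c ` {0..}"
      hence "infdist x (b ` {0..}) \<le> n * \<kappa> (dist o' x)" using n unfolding kappa_nbhd_def by auto
      moreover have "\<kappa> (dist o' x) \<ge> 1" using kap1 by simp
      ultimately have "infdist x (b ` {0..}) \<le> max n 1 * \<kappa> (dist o' x)"
        by (meson max.cobounded1 mult_right_mono order_trans zero_le_one)
      thus "x \<in> kappa_nbhd \<kappa> o' (b ` {0..}) (max n 1)" unfolding kappa_nbhd_def by simp
    qed
    thus False using main[of "max n 1"] by simp
  qed
  thus ?thesis using main by blast
qed

end
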